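(* Let $P\subset\mathbb{R}^n$ be an $n$-dimensional lattice-face polytope. (i) If $P=-P$, then for $1\le j\le i\le n$, $\lambda_j(\pi^{(n-i)}(P),\mathbb{Z}^i)\geq\lambda_j(P)$. (ii) If $0$ is a vertex of $P$ and $SP=\operatorname{conv}(P\cup -P)$, then for $1\le j\le i\le n$, $\lambda_j(\pi^{(n-i)}(SP),\mathbb{Z}^i)\geq\lambda_j(SP)$.
   Context: For $1\le i\le n$ let $\pi^{(n-i)}:\mathbb{R}^n\to\mathbb{R}^i$ be the projection forgetting the last $n-i$ coordinates ($\pi^{(0)}$ the identity). A polytope $P\subset\mathbb{R}^n$ is lattice-face if for every $0\le k\le n-1$ and every subset $U$ of the vertex set of $P$ whose affine hull $\mathrm{aff}(U)$ is $k$-dimensional, $\pi^{(n-k)}(\mathrm{aff}(U)\cap\mathbb{Z}^n)=\mathbb{Z}^k$. For a $0$-symmetric convex body $K\subset\mathbb{R}^d$ and lattice $\Lambda\subset\mathbb{R}^d$, $\lambda_j(K,\Lambda)=\min\{\lambda>0:\dim(\lambda K\cap\Lambda)\ge j\}$ (dimension of affine hull), and $\lambda_j(K)=\lambda_j(K,\mathbb{Z}^n)$ for $K\subset\mathbb{R}^n$. *)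

theory Defs
  imports "HOL-Analysis.Analysis"
begin

text \<open>R^n is modelled as real^'n with a linearly ordered finite index type, n = CARD('n).
  The coordinate order is the order on 'n; rk k is the position (0-based) of coordinate k.
  R^i (i \<le> n) is identified with the coordinate subspace of the first i coordinates.\<close>

definition rk :: "'n::{finite,linorder} \<Rightarrow> nat" where
  "rk k = card {l. l < k}"

text \<open>pi^(n-i): forget the last n-i coordinates (embedded: set them to 0).\<close>
definition proj :: "nat \<Rightarrow> real^'n::{finite,linorder} \<Rightarrow> real^'n::{finite,linorder}" where
  "proj i x = (\<chi> k. if rk k < i then x $ k else 0)"

text \<open>Z^i, embedded as the integer points of the first-i coordinate subspace.\<close>
definition Zlat :: "nat \<Rightarrow> (real^'n::{finite,linorder}) set" where
  "Zlat i = {x. (\<forall>k. x $ k \<in> \<int>) \<and> (\<forall>k. i \<le> rk k \<longrightarrow> x $ k = 0)}"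

definition vertices :: "(real^'n::{finite,linorder}) set \<Rightarrow> (real^'n::{finite,linorder}) set" where
  "vertices P = {v. v extreme_point_of P}"

definition lattice_face :: "(real^'n::{finite,linorder}) set \<Rightarrow> bool" where
  "lattice_face P \<longleftrightarrow>
     (\<forall>k < CARD('n). \<forall>U. U \<subseteq> vertices P \<longrightarrow> aff_dim (affine hull U) = int k \<longrightarrow>
        proj k ` (affine hull U \<inter> Zlat CARD('n)) = Zlat k)"

text \<open>lambda_j(K, Lambda) = min {l > 0. dim aff(l K \<inter> Lambda) \<ge> j}\<close>
definition succ_min :: "nat \<Rightarrow> (real^'n::{finite,linorder}) set \<Rightarrow> (real^'n::{finite,linorder}) set \<Rightarrow> real" where
  "succ_min j K L = Inf {l. l > 0 \<and> aff_dim (((*\<^sub>R) l ` K) \<inter> L) \<ge> int j}"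

end

theory Submission
  imports Defs
begin


lemma rk_mono: "(k::'n::{finite,linorder}) < l \<Longrightarrow> rk k < rk l"
  unfolding rk_def by (rule psubset_card_mono) auto

lemma rk_inj: "inj (rk :: 'n::{finite,linorder} \<Rightarrow> nat)"
  by (metis injI linorder_neq_iff rk_mono less_irrefl)

lemma rk_less: "rk (k::'n::{finite,linorder}) < CARD('n)"
  unfolding rk_def by (rule psubset_card_mono) auto

lemma rk_bij: "bij_betw (rk :: 'n::{finite,linorder} \<Rightarrow> nat) UNIV {..<CARD('n)}"
proof -
  have "rk ` (UNIV::'n set) \<subseteq> {..<CARD('n)}" using rk_less by auto
  moreover have "card (rk ` (UNIV::'n set)) = CARD('n)"
    using card_image[OF inj_on_subset[OF rk_inj]] by auto
  ultimately have "rk ` (UNIV::'n set) = {..<CARD('n)}"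
    by (simp add: card_subset_eq)
  then show ?thesis using rk_inj by (simp add: bij_betw_def)
qed

lemma card_rk_less: "i \<le> CARD('n) \<Longrightarrow> card {k::'n::{finite,linorder}. rk k < i} = i"
proof -
  assume i: "i \<le> CARD('n)"
  have "rk ` {k::'n. rk k < i} = {..<i}"
  proof safe
    fix m assume "m < i"
    then have "m \<in> range (rk::'n \<Rightarrow> nat)" using rk_bij[where 'n='n] i unfolding bij_betw_def by auto
    then obtain k::'n where "m = rk k" by auto
    then show "m \<in> rk ` {k::'n. rk k < i}" using \<open>m < i\<close> by auto
  qed
  moreover have "card (rk ` {k::'n. rk k < i}) = card {k::'n. rk k < i}"
    by (rule card_image[OF inj_on_subset[OF rk_inj]]) auto
  ultimately show ?thesis by simp
qed

lemma linear_proj: "linear (proj i :: real^'n::{finite,linorder} \<Rightarrow> real^'n::{finite,linorder})"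
  by (rule linearI) (auto simp: proj_def vec_eq_iff)

lemma proj_id: "CARD('n) \<le> i \<Longrightarrow> proj i (x::real^'n::{finite,linorder}) = x"
  using rk_less[where 'n='n] by (auto simp: proj_def vec_eq_iff) (meson less_le_trans)

lemma range_proj: "range (proj i :: real^'n::{finite,linorder} \<Rightarrow> real^'n::{finite,linorder}) = {x. \<forall>k. i \<le> rk k \<longrightarrow> x $ k = 0}"
proof safe
  fix x :: "(real,'n) vec" and k :: 'n assume "i \<le> rk k" then show "proj i x $ k = 0" by (simp add: proj_def)
next
  fix x :: "(real,'n) vec" assume "\<forall>k. i \<le> rk k \<longrightarrow> x $ k = 0"
  then have "proj i x = x" by (auto simp: proj_def vec_eq_iff)
  then show "x \<in> range (proj i)" by (metis rangeI)
qed

lemma dim_range_proj: "i \<le> CARD('n) \<Longrightarrow> dim (range (proj i :: real^'n::{finite,linorder} \<Rightarrow> real^'n::{finite,linorder})) = i"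
proof -
  assume i: "i \<le> CARD('n)"
  define d where "d = (\<lambda>k. axis k (1::real)) ` {k::'n. rk k < i}"
  have dB: "d \<subseteq> Basis" by (auto simp: d_def Basis_vec_def)
  have "{x::(real,'n) vec. \<forall>b\<in>Basis. b \<notin> d \<longrightarrow> x \<bullet> b = 0} = {x. \<forall>k. i \<le> rk k \<longrightarrow> x $ k = 0}"
  proof safe
    fix x :: "(real,'n) vec" and k :: 'n assume "\<forall>b\<in>Basis. b \<notin> d \<longrightarrow> x \<bullet> b = 0" "i \<le> rk k"
    moreover have "axis k (1::real) \<notin> d" using \<open>i \<le> rk k\<close> by (auto simp: d_def axis_eq_axis)
    ultimately show "x $ k = 0" by (simp add: Basis_vec_def cart_eq_inner_axis)
  next
    fix x :: "(real,'n) vec" and b assume "\<forall>k. i \<le> rk k \<longrightarrow> x $ k = 0" "b \<in> Basis" "b \<notin> d"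
    then obtain k where b: "b = axis k 1" by (auto simp: Basis_vec_def)
    then have "i \<le> rk k" using \<open>b \<notin> d\<close> by (auto simp: d_def)
    then show "x \<bullet> b = 0" using b \<open>\<forall>k. i \<le> rk k \<longrightarrow> x $ k = 0\<close> by (simp add: inner_axis)
  qed
  then have "dim (range (proj i :: (real,'n) vec \<Rightarrow> (real,'n) vec)) = card d"
    using dim_substandard[OF dB] by (simp add: range_proj)
  also have "card d = card {k::'n. rk k < i}"
    unfolding d_def by (rule card_image) (auto simp: inj_on_def axis_eq_axis)
  finally show ?thesis using card_rk_less[OF i] by simp
qed



lemma dep_lemma:
  fixes f :: "'a \<Rightarrow> 'b::real_vector"
  assumes S: "finite S" and nd: "\<not> (inj_on f S \<and> independent (f ` S))"
  shows "\<exists>w. (\<exists>v\<in>S. w v \<noteq> 0) \<and> (\<Sum>v\<in>S. w v *\<^sub>R f v) = 0"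
proof (cases "inj_on f S")
  case False
  then obtain a b where ab: "a \<in> S" "b \<in> S" "a \<noteq> b" "f a = f b" by (auto simp: inj_on_def)
  define w where "w = (\<lambda>v. (if v = a then 1 else 0) - (if v = b then 1 else (0::real)))"
  have "(\<Sum>v\<in>S. w v *\<^sub>R f v) = (\<Sum>v\<in>S. (if v = a then f v else 0)) - (\<Sum>v\<in>S. (if v = b then f v else 0))"
  proof -
    have "\<And>v. w v *\<^sub>R f v = (if v = a then f v else 0) - (if v = b then f v else 0)"
      by (auto simp: w_def)
    then show ?thesis by (simp add: sum_subtractf)
  qed
  also have "\<dots> = 0" using ab S by simp
  finally show ?thesis using ab by (intro exI[of _ w]) (auto simp: w_def)
next
  case True
  with nd have "dependent (f ` S)" by simp
  then obtain u where u: "\<exists>v\<in>f ` S. u v \<noteq> 0" "(\<Sum>v\<in>f ` S. u v *\<^sub>R v) = 0"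
    using dependent_finite[of "f ` S"] S by auto
  have "(\<Sum>v\<in>S. u (f v) *\<^sub>R f v) = 0"
    using u(2) sum.reindex[OF True, of "\<lambda>v. u v *\<^sub>R v"] by simp
  then show ?thesis using u(1) by (intro exI[of _ "u \<circ> f"]) auto
qed

lemma red_lemma:
  fixes f :: "'a \<Rightarrow> 'b::real_vector"
  assumes S: "finite S" and u: "\<forall>x\<in>S. 0 \<le> u x" "sum u S \<le> 1" "(\<Sum>x\<in>S. u x *\<^sub>R f x) = y"
    and w: "\<exists>v\<in>S. w v \<noteq> 0" "(\<Sum>x\<in>S. w x *\<^sub>R f x) = 0" "sum w S \<le> 0"
  shows "\<exists>a\<in>S. \<exists>u'. (\<forall>x\<in>S-{a}. 0 \<le> u' x) \<and> sum u' (S-{a}) \<le> 1 \<and> (\<Sum>x\<in>S-{a}. u' x *\<^sub>R f x) = y"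
proof -
  have "\<exists>x\<in>S. w x < 0"
  proof (rule ccontr)
    assume "\<not> ?thesis"
    then have "\<forall>x\<in>S. 0 \<le> w x" by auto
    moreover then have "sum w S = 0" using w(3) sum_nonneg[of S w] by auto
    ultimately have "\<forall>x\<in>S. w x = 0" using sum_nonneg_eq_0_iff[OF S] by blast
    then show False using w(1) by auto
  qed
  define I where "I = (\<lambda>v. u v / (- w v)) ` {v\<in>S. w v < 0}"
  define t where "t = Min I"
  have "I \<noteq> {}" "finite I" using \<open>\<exists>x\<in>S. w x < 0\<close> S by (auto simp: I_def)
  obtain a where a: "a \<in> S" "w a < 0" "t = u a / (- w a)"
    using Min_in[OF \<open>finite I\<close> \<open>I \<noteq> {}\<close>] unfolding t_def I_def by auto
  have "0 \<le> u a / (- w a)" using a u(1) by (intro divide_nonneg_pos) auto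
  then have t0: "t \<ge> 0" using a by simp
  have tle: "\<And>v. v \<in> S \<Longrightarrow> w v < 0 \<Longrightarrow> t \<le> u v / (- w v)"
    unfolding t_def I_def using S by (auto intro: Min_le)
  define u' where "u' = (\<lambda>v. u v + t * w v)"
  have pos: "\<forall>v\<in>S. 0 \<le> u' v"
  proof
    fix v assume v: "v \<in> S"
    show "0 \<le> u' v"
    proof (cases "w v < 0")
      case True
      then have "t * (- w v) \<le> u v" proof -
        have "0 < - w v" using True by simp
        then show ?thesis using pos_le_divide_eq[of "- w v" t "u v"] tle[OF v True] by blast
      qed
      then show ?thesis by (simp add: u'_def algebra_simps)
    next
      case False
      then show ?thesis using u(1) v t0 by (simp add: u'_def)
    qed
  qed
  have ua: "u' a = 0" using a by (simp add: u'_def field_simps)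
  have s1: "sum u' S \<le> 1"
  proof -
    have "sum u' S = sum u S + t * sum w S" by (simp add: u'_def sum.distrib sum_distrib_left)
    also have "\<dots> \<le> 1" using u(2) w(3) t0 by (smt (verit) mult_nonneg_nonpos)
    finally show ?thesis .
  qed
  have s2: "(\<Sum>x\<in>S. u' x *\<^sub>R f x) = y"
  proof -
    have "(\<Sum>x\<in>S. u' x *\<^sub>R f x) = (\<Sum>x\<in>S. u x *\<^sub>R f x + t *\<^sub>R (w x *\<^sub>R f x))"
      by (simp add: u'_def scaleR_add_left)
    also have "\<dots> = (\<Sum>x\<in>S. u x *\<^sub>R f x) + t *\<^sub>R (\<Sum>x\<in>S. w x *\<^sub>R f x)"
      by (simp add: sum.distrib scaleR_sum_right)
    finally show ?thesis using u(3) w(2) by simp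
  qed
  have "sum u' (S - {a}) = sum u' S" using ua sum.remove[OF S a(1), of u'] by simp
  moreover have "(\<Sum>x\<in>S-{a}. u' x *\<^sub>R f x) = (\<Sum>x\<in>S. u' x *\<^sub>R f x)"
    using ua sum.remove[OF S a(1), of "\<lambda>x. u' x *\<^sub>R f x"] by simp
  ultimately show ?thesis using a(1) pos s1 s2 by (intro bexI[of _ a] exI[of _ u']) auto
qed

lemma carath_lin:
  fixes f :: "'a \<Rightarrow> 'b::real_vector"
  assumes A: "finite A" and c: "\<forall>a\<in>A. 0 \<le> c a" "sum c A \<le> 1"
  shows "\<exists>S u. S \<subseteq> A \<and> (\<forall>a\<in>S. 0 \<le> u a) \<and> sum u S \<le> 1 \<and>
           (\<Sum>a\<in>S. u a *\<^sub>R f a) = (\<Sum>a\<in>A. c a *\<^sub>R f a) \<and> inj_on f S \<and> independent (f ` S)"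
proof -
  define y where "y = (\<Sum>a\<in>A. c a *\<^sub>R f a)"
  let ?P = "\<lambda>n. \<exists>S u. S \<subseteq> A \<and> card S = n \<and> (\<forall>a\<in>S. 0 \<le> u a) \<and> sum u S \<le> 1 \<and> (\<Sum>a\<in>S. u a *\<^sub>R f a) = y"
  have "?P (card A)" using c by (auto simp: y_def)
  then have "\<exists>n\<le>card A. (\<forall>k<n. \<not> ?P k) \<and> ?P n"
    by (rule_tac ex_least_nat_le) auto
  then obtain n where "?P n" and smallest: "\<forall>k<n. \<not> ?P k" by blast
  then obtain S u where S: "S \<subseteq> A" "card S = n" and u: "\<forall>a\<in>S. 0 \<le> u a" "sum u S \<le> 1" "(\<Sum>a\<in>S. u a *\<^sub>R f a) = y"
    by blast
  have fS: "finite S" using S A finite_subset by blast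
  have "inj_on f S \<and> independent (f ` S)"
  proof (rule ccontr)
    assume "\<not> ?thesis"
    then obtain w where w: "\<exists>v\<in>S. w v \<noteq> 0" "(\<Sum>v\<in>S. w v *\<^sub>R f v) = 0"
      using dep_lemma[OF fS] by blast
    define w' where "w' = (if sum w S \<le> 0 then w else (\<lambda>v. - w v))"
    have w': "\<exists>v\<in>S. w' v \<noteq> 0" "(\<Sum>v\<in>S. w' v *\<^sub>R f v) = 0" "sum w' S \<le> 0"
      using w by (auto simp: w'_def sum_negf)
    obtain a u' where a: "a \<in> S" "\<forall>x\<in>S-{a}. 0 \<le> u' x" "sum u' (S-{a}) \<le> 1" "(\<Sum>x\<in>S-{a}. u' x *\<^sub>R f x) = y"
      using red_lemma[OF fS u w'] by blast
    have c1: "card (S - {a}) = n - 1" using a(1) S(2) fS by simp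
    have c2: "S - {a} \<subseteq> A" using S(1) by blast
    have "?P (n - 1)"
      using c1 c2 a(2-4) by blast
    moreover have "n - 1 < n" using a(1) S(2) fS card_gt_0_iff by (metis diff_less empty_iff zero_less_one)
    ultimately show False using smallest by blast
  qed
  then show ?thesis using S u by (auto simp: y_def)
qed



lemma conv0:
  fixes K :: "'a::real_vector set"
  assumes K: "convex K" "0 \<in> K" and S: "finite S" and u: "\<forall>a\<in>S. 0 \<le> u a" "sum u S \<le> 1"
    and SK: "S \<subseteq> K"
  shows "(\<Sum>a\<in>S. u a *\<^sub>R a) \<in> K"
proof (cases "sum u S = 0")
  case True
  then have "\<forall>a\<in>S. u a = 0" using sum_nonneg_eq_0_iff[OF S] u(1) by blast
  then show ?thesis using K(2) by simp
next
  case False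
  define s where "s = sum u S"
  have s0: "s > 0" using False u(1) sum_nonneg[of S u] unfolding s_def by force
  have "(\<Sum>a\<in>S. (u a / s) *\<^sub>R a) \<in> K"
    using S K(1) u(1) SK s0 by (intro convex_sum) (auto simp: s_def sum_divide_distrib[symmetric])
  then have "s *\<^sub>R (\<Sum>a\<in>S. (u a / s) *\<^sub>R a) + (1 - s) *\<^sub>R 0 \<in> K"
    using convexD[OF K(1) _ K(2), of _ s "1 - s"] s0 u(2) unfolding s_def by auto
  moreover have "s *\<^sub>R (\<Sum>a\<in>S. (u a / s) *\<^sub>R a) = (\<Sum>a\<in>S. u a *\<^sub>R a)"
    using s0 by (simp add: scaleR_sum_right)
  ultimately show ?thesis by simp
qed

lemma lift:
  fixes V :: "(real,'n::{finite,linorder}) vec set"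
  assumes V: "finite V" and sp: "span (V \<union> uminus ` V) = UNIV"
   and i: "i < CARD('n)"
   and H: "\<And>U. U \<subseteq> V \<union> uminus ` V \<Longrightarrow> independent (proj i ` U) \<Longrightarrow> inj_on (proj i) U \<Longrightarrow> card U = i
            \<Longrightarrow> proj i ` (span U \<inter> Zlat CARD('n)) = Zlat i"
   and l: "l > 0"
  shows "(*\<^sub>R) l ` proj i ` (convex hull (V \<union> uminus ` V)) \<inter> Zlat i
           \<subseteq> proj i ` ((*\<^sub>R) l ` (convex hull (V \<union> uminus ` V)) \<inter> Zlat CARD('n))"
proof
  define A where "A = V \<union> uminus ` V"
  define K where "K = convex hull A"
  have A: "finite A" using V by (simp add: A_def)
  have lin: "linear (proj i :: (real,'n) vec \<Rightarrow> (real,'n) vec)" by (rule linear_proj)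
  fix y assume "y \<in> (*\<^sub>R) l ` proj i ` (convex hull (V \<union> uminus ` V)) \<inter> Zlat i"
  then obtain w where w: "w \<in> K" "y = l *\<^sub>R proj i w" and y: "y \<in> Zlat i"
    by (auto simp: K_def A_def)
  obtain c where c: "\<forall>a\<in>A. 0 \<le> c a" "sum c A = 1" "(\<Sum>a\<in>A. c a *\<^sub>R a) = w"
    using w(1) unfolding K_def convex_hull_finite[OF A] by auto
  have pw: "proj i w = (\<Sum>a\<in>A. c a *\<^sub>R proj i a)"
    using c(3) linear_sum[OF lin] linear_scale[OF lin] by (metis (no_types, lifting) sum.cong)
  obtain S u where S: "S \<subseteq> A" "\<forall>a\<in>S. 0 \<le> u a" "sum u S \<le> 1"
      "(\<Sum>a\<in>S. u a *\<^sub>R proj i a) = (\<Sum>a\<in>A. c a *\<^sub>R proj i a)" "inj_on (proj i) S" "independent (proj i ` S)"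
    using carath_lin[OF A c(1), of "proj i"] c(2) by auto
  have fS: "finite S" using S(1) A finite_subset by blast
  define x' where "x' = (\<Sum>a\<in>S. u a *\<^sub>R a)"
  have "V \<noteq> {}"
  proof
    assume "V = {}"
    then have "span (V \<union> uminus ` V) = {0}" by simp
    moreover have "axis undefined (1::real) \<noteq> (0::(real,'n) vec)" by (simp add: axis_eq_0_iff)
    ultimately show False using sp by (metis UNIV_I singletonD)
  qed
  then obtain v where v: "v \<in> V" by blast
  have "(1/2) *\<^sub>R v + (1/2) *\<^sub>R (- v) \<in> K"
    using v unfolding K_def A_def by (intro convexD) (auto intro: hull_inc)
  then have K0: "0 \<in> K" by simp
  have x'K: "x' \<in> K" unfolding x'_def
    using conv0[OF _ K0 fS S(2,3)] S(1) by (auto simp: K_def intro: hull_inc)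
  have px': "proj i x' = proj i w"
    unfolding x'_def pw S(4)[symmetric] using linear_sum[OF lin] linear_scale[OF lin] by (metis (no_types, lifting) sum.cong)
  obtain B where B: "proj i ` S \<subseteq> B" "B \<subseteq> proj i ` A" "independent B" "proj i ` A \<subseteq> span B"
    using maximal_independent_subset_extend[of "proj i ` S" "proj i ` A"] S(1,6) by blast
  define g where "g = inv_into A (proj i)"
  have gA: "\<And>b. b \<in> proj i ` A \<Longrightarrow> g b \<in> A" unfolding g_def by (rule inv_into_into)
  have pg: "\<And>b. b \<in> proj i ` A \<Longrightarrow> proj i (g b) = b" unfolding g_def by (rule f_inv_into_f)
  define U where "U = S \<union> g ` (B - proj i ` S)"
  have UA: "U \<subseteq> A" using S(1) gA B(2) by (auto simp: U_def)
  have pU: "proj i ` U = B"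
  proof -
    have e1: "proj i ` g ` (B - proj i ` S) = B - proj i ` S"
      using pg B(2) by (force simp: image_image)
    have e2: "proj i ` U = proj i ` S \<union> proj i ` g ` (B - proj i ` S)" by (simp only: U_def image_Un)
    show ?thesis unfolding e2 e1 using B(1) by blast
  qed
  have injU: "inj_on (proj i) U"
  proof (rule inj_onI)
    fix a b assume ab: "a \<in> U" "b \<in> U" "proj i a = proj i b"
    show "a = b"
    proof (cases "a \<in> S")
      case aS: True
      show ?thesis
      proof (cases "b \<in> S")
        case True then show ?thesis using aS ab S(5) by (auto dest: inj_onD)
      next
        case False
        then obtain b' where b': "b' \<in> B - proj i ` S" "b = g b'" using ab(2) by (auto simp: U_def)
        then have "proj i b = b'" using pg B(2) by auto
        then have "b' \<in> proj i ` S" using ab(3) aS by (metis image_eqI)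
        then show ?thesis using b' by blast
      qed
    next
      case False
      then obtain a' where a': "a' \<in> B - proj i ` S" "a = g a'" using ab(1) by (auto simp: U_def)
      show ?thesis
      proof (cases "b \<in> S")
        case True
        have "proj i a = a'" using a' pg B(2) by auto
        then have "a' \<in> proj i ` S" using ab(3) True by (metis image_eqI)
        then show ?thesis using a' by blast
      next
        case False
        then obtain b' where b': "b' \<in> B - proj i ` S" "b = g b'" using ab(2) by (auto simp: U_def)
        have "a' = b'" using a' b' pg B(2) ab(3) by (metis Diff_iff subsetD)
        then show ?thesis using a' b' by simp
      qed
    qed
  qed
  have spanB: "span B = range (proj i)"
  proof
    have "B \<subseteq> range (proj i)" using B(2) by auto
    then have "span B \<subseteq> span (range (proj i))" by (rule span_mono)
    also have "span (range (proj i)) = range (proj i :: (real,'n) vec \<Rightarrow> (real,'n) vec)"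
      using span_linear_image[OF lin, of UNIV] by simp
    finally show "span B \<subseteq> range (proj i)" .
  next
    have "range (proj i) = proj i ` span A" using sp by (simp add: A_def)
    also have "\<dots> = span (proj i ` A)" using span_linear_image[OF lin] by simp
    also have "\<dots> \<subseteq> span B" using B(4) by (metis span_mono span_span)
    finally show "range (proj i) \<subseteq> span B" .
  qed
  have cardU: "card U = i"
  proof -
    have "card U = card B" using card_image[OF injU] pU by simp
    also have "\<dots> = dim (span B)" using dim_span_eq_card_independent[OF B(3)] by simp
    also have "\<dots> = i" using spanB dim_range_proj[where 'n='n] i by simp
    finally show ?thesis .
  qed
  have HU: "proj i ` (span U \<inter> Zlat CARD('n)) = Zlat i"
    using H[OF UA[unfolded A_def]] pU B(3) injU cardU by simp
  then obtain x where x: "x \<in> span U" "x \<in> Zlat CARD('n)" "proj i x = y" using y by force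
  have "x' \<in> span S" unfolding x'_def by (intro span_sum span_scale span_base)
  then have lx': "l *\<^sub>R x' \<in> span U" using span_mono[of S U] by (auto simp: U_def intro: span_scale)
  have "proj i (l *\<^sub>R x') = y" using w(2) px' linear_scale[OF lin] by simp
  moreover have "inj_on (proj i) (span U)"
    using linear_inj_on_span_independent_image[OF lin _ injU] pU B(3) by simp
  ultimately have "x = l *\<^sub>R x'" using x lx' by (auto dest: inj_onD)
  then show "y \<in> proj i ` ((*\<^sub>R) l ` (convex hull (V \<union> uminus ` V)) \<inter> Zlat CARD('n))"
    using x x'K by (auto simp: K_def A_def)
qed



lemma H_gen:
  fixes P :: "(real,'n::{finite,linorder}) vec set"
  assumes lf: "lattice_face P" and i: "i < CARD('n)"
    and U: "finite U" "independent (proj i ` U)" "inj_on (proj i) U" "card U = i"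
    and X: "X \<subseteq> vertices P" "0 \<in> affine hull X" "X \<subseteq> span U" "U \<subseteq> span X"
  shows "proj i ` (span U \<inter> Zlat CARD('n)) = Zlat i"
proof -
  have lin: "linear (proj i :: (real,'n) vec \<Rightarrow> (real,'n) vec)" by (rule linear_proj)
  have ah: "affine hull X = span U"
  proof
    have "span X \<subseteq> span U" using X(3) by (metis span_mono span_span)
    then show "affine hull X \<subseteq> span U" using affine_hull_subset_span by blast
  next
    have sub: "subspace (affine hull X)" using X(2) by (simp add: subspace_affine)
    have "span U \<subseteq> span X" using X(4) by (metis span_mono span_span)
    also have "span X \<subseteq> affine hull X" using span_minimal[OF hull_subset sub] .
    finally show "span U \<subseteq> affine hull X" .
  qed
  have dU: "dim U = i"
  proof -
    have "dim U \<le> card U" by (rule dim_le_card'[OF U(1)])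
    moreover have "dim (proj i ` U) \<le> dim U" by (rule dim_image_le[OF lin])
    moreover have "dim (proj i ` U) = card U"
      using dim_eq_card_independent[OF U(2)] card_image[OF U(3)] by simp
    ultimately show ?thesis using U(4) by simp
  qed
  have ad: "aff_dim (affine hull X) = int i"
    unfolding ah using aff_dim_subspace[OF subspace_span[of U]] dU by (simp add: dim_span)
  have H1: "\<forall>k < CARD('n). \<forall>U. U \<subseteq> vertices P \<longrightarrow> aff_dim (affine hull U) = int k \<longrightarrow>
        proj k ` (affine hull U \<inter> Zlat CARD('n)) = Zlat k" using lf unfolding lattice_face_def .
  have "proj i ` (affine hull X \<inter> Zlat CARD('n)) = Zlat i"
    by (rule H1[rule_format, OF i X(1) ad])
  then show ?thesis unfolding ah .
qed

lemma final:
  fixes V :: "(real,'n::{finite,linorder}) vec set"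
  assumes V: "finite V" and sp: "span (V \<union> uminus ` V) = UNIV"
   and H: "\<And>i U. 1 \<le> i \<Longrightarrow> i < CARD('n) \<Longrightarrow> U \<subseteq> V \<union> uminus ` V \<Longrightarrow> independent (proj i ` U)
            \<Longrightarrow> inj_on (proj i) U \<Longrightarrow> card U = i \<Longrightarrow> proj i ` (span U \<inter> Zlat CARD('n)) = Zlat i"
   and ij: "1 \<le> j" "j \<le> i" "i \<le> CARD('n)"
  shows "succ_min j (proj i ` (convex hull (V \<union> uminus ` V))) (Zlat i)
           \<ge> succ_min j (convex hull (V \<union> uminus ` V)) (Zlat CARD('n))"
proof -
  define A where "A = V \<union> uminus ` V"
  define K where "K = convex hull A"
  have lin: "linear (proj i :: (real,'n) vec \<Rightarrow> (real,'n) vec)" by (rule linear_proj)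
  have incl: "(*\<^sub>R) l ` proj i ` K \<inter> Zlat i \<subseteq> proj i ` ((*\<^sub>R) l ` K \<inter> Zlat CARD('n))" if l: "l > 0" for l
  proof (cases "i < CARD('n)")
    case True
    have i1: "1 \<le> i" using ij by linarith
    have Hi: "proj i ` (span U \<inter> Zlat CARD('n)) = Zlat i"
      if "U \<subseteq> V \<union> uminus ` V" "independent (proj i ` U)" "inj_on (proj i) U" "card U = i" for U
      by (rule H[OF i1 True that])
    show ?thesis using lift[OF V sp True Hi l] unfolding K_def A_def .
  next
    case False
    then have ii: "i = CARD('n)" using ij by simp
    have "proj i = (\<lambda>x::(real,'n) vec. x)" using proj_id[where 'n='n] ii by auto
    then show ?thesis using ii by simp
  qed
  define SA where "SA = {l. l > 0 \<and> int j \<le> aff_dim ((*\<^sub>R) l ` proj i ` K \<inter> Zlat i)}"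
  define SB where "SB = {l. l > 0 \<and> int j \<le> aff_dim ((*\<^sub>R) l ` K \<inter> Zlat CARD('n))}"
  have SAB: "SA \<subseteq> SB"
  proof
    fix l assume "l \<in> SA"
    then have l: "l > 0" "int j \<le> aff_dim ((*\<^sub>R) l ` proj i ` K \<inter> Zlat i)" by (auto simp: SA_def)
    have "aff_dim ((*\<^sub>R) l ` proj i ` K \<inter> Zlat i) \<le> aff_dim (proj i ` ((*\<^sub>R) l ` K \<inter> Zlat CARD('n)))"
      by (rule aff_dim_subset[OF incl[OF l(1)]])
    also have "\<dots> \<le> aff_dim ((*\<^sub>R) l ` K \<inter> Zlat CARD('n))" by (rule aff_dim_linear_image_le[OF lin])
    finally show "l \<in> SB" using l by (auto simp: SB_def)
  qed
  \<comment> \<open>a ball around 0 in K\<close>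
  have "V \<noteq> {}"
  proof
    assume "V = {}"
    then have "span (V \<union> uminus ` V) = {0}" by simp
    moreover have "axis undefined (1::real) \<noteq> (0::(real,'n) vec)" by (simp add: axis_eq_0_iff)
    ultimately show False using sp by (metis UNIV_I singletonD)
  qed
  then obtain v where v: "v \<in> V" by blast
  have "(1/2) *\<^sub>R v + (1/2) *\<^sub>R (- v) \<in> affine hull A"
    using v unfolding A_def by (intro mem_affine[OF affine_affine_hull]) (auto intro: hull_inc)
  then have "0 \<in> affine hull A" by simp
  then have "subspace (affine hull A)" by (simp add: subspace_affine)
  then have "span A \<subseteq> affine hull A" by (rule span_minimal[OF hull_subset])
  then have ahA: "affine hull A = UNIV" using sp by (auto simp: A_def)
  have "rel_interior K = interior K"
    by (rule rel_interior_interior) (simp add: K_def affine_hull_convex_hull ahA)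
  moreover have "rel_interior K \<noteq> {}"
    using v by (auto simp: rel_interior_eq_empty K_def A_def)
  ultimately obtain x where "x \<in> interior K" by auto
  then obtain e where e: "e > 0" "ball x e \<subseteq> K" using mem_interior by blast
  have negA: "uminus ` A = A"
  proof -
    have "x \<in> uminus ` A" if "x \<in> A" for x
    proof -
      from that consider "x \<in> V" | y where "y \<in> V" "x = - y" by (auto simp: A_def)
      then show ?thesis
      proof cases
        case 1
        then have "- x \<in> A" by (simp add: A_def)
        then show ?thesis by (metis image_eqI minus_minus)
      next
        case 2
        then have "y \<in> A" by (simp add: A_def)
        then show ?thesis using 2 by blast
      qed
    qed
    then show ?thesis by (auto simp: A_def)
  qed
  have negK: "uminus ` K = K"
    unfolding K_def using convex_hull_linear_image[OF linear_uminus, of A] negA by simp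
  have ballK: "y \<in> K" if y: "norm y < e" for y
  proof -
    have "x + y \<in> K" using e y by (auto simp: dist_norm intro!: subsetD[OF e(2)])
    moreover have "x - y \<in> K" using e y by (auto simp: dist_norm intro!: subsetD[OF e(2)])
    then have "- (x - y) \<in> K" using negK by (metis image_eqI)
    ultimately have "(1/2) *\<^sub>R (x + y) + (1/2) *\<^sub>R (- (x - y)) \<in> K"
      by (intro convexD) (auto simp: K_def)
    moreover have "(1/2) *\<^sub>R (x + y) + (1/2) *\<^sub>R (- (x - y)) = y" by (simp add: vec_eq_iff algebra_simps)
    ultimately show ?thesis by simp
  qed
  \<comment> \<open>SA is nonempty\<close>
  define l where "l = 2 / e"
  have l0: "l > 0" using e by (simp add: l_def)
  define E where "E = (\<lambda>k. axis k (1::real)) ` {k::'n. rk k < j}"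
  define T0 where "T0 = insert 0 E"
  have T0sub: "T0 \<subseteq> (*\<^sub>R) l ` proj i ` K \<inter> Zlat i"
  proof
    fix t assume "t \<in> T0"
    then consider "t = 0" | k where "rk k < j" "t = axis k 1" by (auto simp: T0_def E_def)
    then show "t \<in> (*\<^sub>R) l ` proj i ` K \<inter> Zlat i"
    proof cases
      case 1
      have "0 \<in> K" using ballK e by simp
      moreover have "(0::(real,'n) vec) = l *\<^sub>R proj i 0" using linear_0[OF lin] by simp
      ultimately have "0 \<in> (*\<^sub>R) l ` proj i ` K" by blast
      moreover have "(0::(real,'n) vec) \<in> Zlat i" by (simp add: Zlat_def)
      ultimately show ?thesis using 1 by simp
    next
      case 2
      define z where "z = (e/2) *\<^sub>R axis k (1::real)"
      have "norm z < e" using e by (simp add: z_def norm_axis_1)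
      then have zK: "z \<in> K" by (rule ballK)
      have "proj i z = z" using 2 ij unfolding z_def proj_def
        by (auto simp: vec_eq_iff axis_def)
      moreover have "l *\<^sub>R z = t" using 2 e by (simp add: z_def l_def)
      ultimately have "t \<in> (*\<^sub>R) l ` proj i ` K" using zK by (metis image_eqI)
      moreover have "t \<in> Zlat i" using 2 ij by (auto simp: Zlat_def axis_def)
      ultimately show ?thesis by simp
    qed
  qed
  have "int j \<le> aff_dim T0"
  proof -
    have "aff_dim T0 = int (dim T0)" by (rule aff_dim_zero) (simp add: T0_def hull_inc)
    moreover have "independent E" unfolding E_def
      by (rule independent_mono[OF independent_Basis]) (auto simp: Basis_vec_def)
    then have "card E \<le> dim T0" by (intro independent_card_le_dim) (auto simp: T0_def)
    moreover have "card E = j"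
    proof -
      have "card E = card {k::'n. rk k < j}"
        unfolding E_def by (rule card_image) (auto simp: inj_on_def axis_eq_axis)
      then show ?thesis using card_rk_less[where 'n='n] ij by simp
    qed
    ultimately show ?thesis by simp
  qed
  also have "\<dots> \<le> aff_dim ((*\<^sub>R) l ` proj i ` K \<inter> Zlat i)" by (rule aff_dim_subset[OF T0sub])
  finally have "l \<in> SA" using l0 by (simp add: SA_def)
  then have "SA \<noteq> {}" by blast
  moreover have "bdd_below SB" by (auto simp: SB_def bdd_below_def intro!: exI[of _ 0])
  ultimately have "Inf SB \<le> Inf SA" using SAB by (rule cInf_superset_mono)
  then show ?thesis by (simp add: succ_min_def SA_def SB_def K_def A_def)
qed



lemma ext_neg:
  fixes S :: "'a::real_vector set"
  assumes "v extreme_point_of S"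
  shows "(- v) extreme_point_of (uminus ` S)"
proof -
  have vS: "v \<in> S" and nv: "\<And>a b. a \<in> S \<Longrightarrow> b \<in> S \<Longrightarrow> v \<notin> open_segment a b"
    using assms unfolding extreme_point_of_def by auto
  show ?thesis unfolding extreme_point_of_def
  proof (intro conjI ballI)
    show "- v \<in> uminus ` S" using vS by blast
  next
    fix a b assume ab: "a \<in> uminus ` S" "b \<in> uminus ` S"
    show "- v \<notin> open_segment a b"
    proof
      assume "- v \<in> open_segment a b"
      then obtain u where u: "a \<noteq> b" "0 < u" "u < 1" "- v = (1 - u) *\<^sub>R a + u *\<^sub>R b"
        by (auto simp: in_segment)
      then have "v = (1 - u) *\<^sub>R (- a) + u *\<^sub>R (- b)" by (simp add: algebra_simps)
      then have "v \<in> open_segment (- a) (- b)" using u by (auto simp: in_segment)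
      moreover have "- a \<in> S" "- b \<in> S" using ab by auto
      ultimately show False using nv by blast
    qed
  qed
qed

theorem lemma3p3:
  fixes P :: "(real^'n::{finite,linorder}) set"
  assumes "polytope P" and "aff_dim P = int CARD('n)" and "lattice_face P"
  shows "(P = uminus ` P \<longrightarrow>
            (\<forall>i j. 1 \<le> j \<and> j \<le> i \<and> i \<le> CARD('n) \<longrightarrow>
               succ_min j (proj i ` P) (Zlat i) \<ge> succ_min j P (Zlat CARD('n))))
       \<and> (0 \<in> vertices P \<longrightarrow>
            (\<forall>i j. 1 \<le> j \<and> j \<le> i \<and> i \<le> CARD('n) \<longrightarrow>
               succ_min j (proj i ` (convex hull (P \<union> uminus ` P))) (Zlat i)
                 \<ge> succ_min j (convex hull (P \<union> uminus ` P)) (Zlat CARD('n))))"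
proof -
  define V where "V = vertices P"
  obtain V0 where V0: "finite V0" "P = convex hull V0" using assms(1) unfolding polytope_def by blast
  have VV0: "V \<subseteq> V0" using extreme_points_of_convex_hull[of V0] V0(2) by (auto simp: V_def vertices_def)
  have finV: "finite V" using finite_subset[OF VV0 V0(1)] .
  have PV: "P = convex hull V"
    using Krein_Milman_polytope[OF V0(1)] V0(2) by (simp add: V_def vertices_def)
  have "aff_dim V = int DIM((real,'n) vec)"
    using assms(2) PV aff_dim_convex_hull[of V] by simp
  then have "affine hull V = UNIV" by (rule aff_dim_eq_full[THEN iffD1])
  then have sp: "span (V \<union> uminus ` V) = UNIV"
    using affine_hull_subset_span[of V] span_mono[of V "V \<union> uminus ` V"] by auto
  have negP: "uminus ` P = convex hull (uminus ` V)"
    using PV convex_hull_linear_image[OF linear_uminus, of V] by simp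
  have KP: "convex hull (P \<union> uminus ` P) = convex hull (V \<union> uminus ` V)"
  proof -
    have negP': "uminus ` (convex hull V) = convex hull (uminus ` V)"
      by (rule convex_hull_linear_image[OF linear_uminus])
    have "convex hull (V \<union> uminus ` V) = convex hull (convex hull V \<union> convex hull (uminus ` V))"
      by (rule hull_Un) (auto intro: convex_Inter)
    then show ?thesis using PV negP' by simp
  qed
  have finA: "finite (V \<union> uminus ` V)" using finV by simp
  have partI: "\<forall>i j. 1 \<le> j \<and> j \<le> i \<and> i \<le> CARD('n) \<longrightarrow>
               succ_min j (proj i ` P) (Zlat i) \<ge> succ_min j P (Zlat CARD('n))"
    if sym: "P = uminus ` P"
  proof (intro allI impI, elim conjE)
    fix i j :: nat assume ij: "1 \<le> j" "j \<le> i" "i \<le> CARD('n)"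
    have "convex P" using PV by simp
    then have KP': "convex hull (V \<union> uminus ` V) = P"
      using KP sym by (metis Un_absorb convex_hull_eq)
    have negV: "- v \<in> V" if "v \<in> V" for v
    proof -
      have "(- v) extreme_point_of (uminus ` P)"
        using ext_neg[of v P] that by (simp add: V_def vertices_def)
      then show ?thesis using sym by (simp add: V_def vertices_def)
    qed
    have H: "proj i' ` (span U \<inter> Zlat CARD('n)) = Zlat i'"
      if U: "1 \<le> i'" "i' < CARD('n)" "U \<subseteq> V \<union> uminus ` V" "independent (proj i' ` U)"
            "inj_on (proj i') U" "card U = i'" for i' U
    proof -
      have finU: "finite U" using finite_subset[OF U(3) finA] .
      define X where "X = U \<union> uminus ` U"
      have UV: "U \<subseteq> V"
      proof
        fix x assume "x \<in> U"
        then consider "x \<in> V" | y where "y \<in> V" "x = - y" using U(3) by auto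
        then show "x \<in> V" by cases (auto intro: negV)
      qed
      have XV: "X \<subseteq> vertices P" using UV negV by (auto simp: X_def V_def)
      have "U \<noteq> {}" using U(1,6) by auto
      then obtain u where u: "u \<in> U" by blast
      have "(1/2) *\<^sub>R u + (1/2) *\<^sub>R (- u) \<in> affine hull X"
        using u unfolding X_def by (intro mem_affine[OF affine_affine_hull]) (auto intro: hull_inc)
      then have X0: "0 \<in> affine hull X" by simp
      have XU: "X \<subseteq> span U" by (auto simp: X_def intro: span_base span_neg)
      have UX: "U \<subseteq> span X" by (auto simp: X_def intro: span_base)
      show ?thesis by (rule H_gen[OF assms(3) U(2) finU U(4,5,6) XV X0 XU UX])
    qed
    show "succ_min j (proj i ` P) (Zlat i) \<ge> succ_min j P (Zlat CARD('n))"
      using final[OF finV sp H ij] unfolding KP' .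
  qed
  have partII: "\<forall>i j. 1 \<le> j \<and> j \<le> i \<and> i \<le> CARD('n) \<longrightarrow>
               succ_min j (proj i ` (convex hull (P \<union> uminus ` P))) (Zlat i)
                 \<ge> succ_min j (convex hull (P \<union> uminus ` P)) (Zlat CARD('n))"
    if zv: "0 \<in> vertices P"
  proof (intro allI impI, elim conjE)
    fix i j :: nat assume ij: "1 \<le> j" "j \<le> i" "i \<le> CARD('n)"
    have H: "proj i' ` (span U \<inter> Zlat CARD('n)) = Zlat i'"
      if U: "1 \<le> i'" "i' < CARD('n)" "U \<subseteq> V \<union> uminus ` V" "independent (proj i' ` U)"
            "inj_on (proj i') U" "card U = i'" for i' U
    proof -
      have finU: "finite U" using finite_subset[OF U(3) finA] .
      define X where "X = insert 0 (V \<inter> (U \<union> uminus ` U))"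
      have XV: "X \<subseteq> vertices P" using zv by (auto simp: X_def V_def)
      have X0: "0 \<in> affine hull X" by (auto simp: X_def intro: hull_inc)
      have XU: "X \<subseteq> span U" by (auto simp: X_def intro: span_base span_neg span_zero)
      have UX: "U \<subseteq> span X"
      proof
        fix u assume u: "u \<in> U"
        then consider "u \<in> V" | "- u \<in> V" using U(3) by auto
        then show "u \<in> span X"
        proof cases
          case 1 then show ?thesis using u by (auto simp: X_def intro: span_base)
        next
          case 2
          then have "- u \<in> X" using u by (auto simp: X_def)
          then have "- (- u) \<in> span X" by (intro span_neg span_base)
          then show ?thesis by simp
        qed
      qed
      show ?thesis by (rule H_gen[OF assms(3) U(2) finU U(4,5,6) XV X0 XU UX])
    qed
    show "succ_min j (proj i ` (convex hull (P \<union> uminus ` P))) (Zlat i)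
                 \<ge> succ_min j (convex hull (P \<union> uminus ` P)) (Zlat CARD('n))"
      using final[OF finV sp H ij] unfolding KP .
  qed
  show ?thesis using partI partII by blast
qed

end
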